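(* Let $t_0\in[1/2,1]$ be a point where $t\mapsto\left[2t^{4/3}+2(\sqrt{t(1-t)})^{4/3}\right]^{3/4}$ attains its maximum on $[1/2,1]$ ($t_0\approx0.9147$). For every $k\in\mathbb{N}$, $$L_{\mathbb{R},2k}\ge\left[\sum_{j=0}^{2k}\binom{2k}{j}\left|\frac{A_j}{\binom{2k}{j}}\right|^{\frac{4k}{2k+1}}\right]^{\frac{2k+1}{4k}},$$ where $$A_j=\sum_{\ell=0}^{\lfloor j/2\rfloor}\frac{k!\,(-1)^{k-j+\ell}\,t_0^{k-j+2\ell}\,\big(2\sqrt{t_0(1-t_0)}\big)^{j-2\ell}}{\ell!\,(j-2\ell)!\,(k-j+\ell)!},\qquad j=0,\dots,2k$$ (terms with $k-j+\ell<0$ being $0$); these $A_j$ are the coefficients of $x^jy^{2k-j}$ in $(t_0x^2-t_0y^2+2\sqrt{t_0(1-t_0)}\,xy)^k$.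
   Context: All spaces are real. $\check P$ is the polar of an $m$-homogeneous polynomial $P$ (the unique symmetric $m$-linear form with $\check P(x,\dots,x)=P(x)$). For $x_1,\dots,x_N$ in a Banach space $X$, $\|(x_j)\|_{w,1}=\sup\{\sum_j|\varphi(x_j)|:\varphi\in X',\|\varphi\|\le1\}$. $L_{\mathbb{R},m}$ is the smallest constant $L$ such that for every real Banach space $X$, every continuous $m$-homogeneous $P:X\to\mathbb{R}$, every $N$ and all $x^{(k)}_j\in X$: $\big(\sum_{j_1,\dots,j_m=1}^N|\check P(x^{(1)}_{j_1},\dots,x^{(m)}_{j_m})|^{\frac{2m}{m+1}}\big)^{\frac{m+1}{2m}}\le L\|P\|\prod_{k=1}^m\|(x^{(k)}_j)_{j=1}^N\|_{w,1}$. $\lfloor h\rfloor$ is the integer part. *)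

theory Defs
  imports Complex_Main "HOL-Combinatorics.Permutations"
begin

text \<open>Real Banach spaces are represented concretely as a linear subspace V of the
  real vector space (nat => real) together with a complete norm nu on V.
  Vectors are added and scaled pointwise.\<close>

type_synonym vec = "nat \<Rightarrow> real"

definition vadd :: "vec \<Rightarrow> vec \<Rightarrow> vec" where
  "vadd x y = (\<lambda>i. x i + y i)"

definition vsub :: "vec \<Rightarrow> vec \<Rightarrow> vec" where
  "vsub x y = (\<lambda>i. x i - y i)"

definition vscale :: "real \<Rightarrow> vec \<Rightarrow> vec" where
  "vscale c x = (\<lambda>i. c * x i)"

definition is_banach_str :: "vec set \<Rightarrow> (vec \<Rightarrow> real) \<Rightarrow> bool" where
  "is_banach_str V nu \<longleftrightarrow>
     (\<lambda>i. 0) \<in> V \<and>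
     (\<forall>x\<in>V. \<forall>y\<in>V. vadd x y \<in> V) \<and>
     (\<forall>x\<in>V. \<forall>c. vscale c x \<in> V) \<and>
     (\<forall>x\<in>V. nu x \<ge> 0) \<and>
     (\<forall>x\<in>V. nu x = 0 \<longleftrightarrow> x = (\<lambda>i. 0)) \<and>
     (\<forall>x\<in>V. \<forall>c. nu (vscale c x) = \<bar>c\<bar> * nu x) \<and>
     (\<forall>x\<in>V. \<forall>y\<in>V. nu (vadd x y) \<le> nu x + nu y) \<and>
     (\<forall>s::nat \<Rightarrow> vec. (\<forall>n. s n \<in> V) \<longrightarrow>
        (\<forall>e>0. \<exists>M. \<forall>p\<ge>M. \<forall>q\<ge>M. nu (vsub (s p) (s q)) < e) \<longrightarrow>
        (\<exists>l\<in>V. \<forall>e>0. \<exists>M. \<forall>p\<ge>M. nu (vsub (s p) l) < e))"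

definition linear_on :: "vec set \<Rightarrow> (vec \<Rightarrow> real) \<Rightarrow> bool" where
  "linear_on V phi \<longleftrightarrow>
     (\<forall>x\<in>V. \<forall>y\<in>V. phi (vadd x y) = phi x + phi y) \<and>
     (\<forall>x\<in>V. \<forall>c. phi (vscale c x) = c * phi x)"

definition dual_ball :: "vec set \<Rightarrow> (vec \<Rightarrow> real) \<Rightarrow> (vec \<Rightarrow> real) set" where
  "dual_ball V nu = {phi. linear_on V phi \<and> (\<forall>x\<in>V. \<bar>phi x\<bar> \<le> nu x)}"

definition weak1_norm :: "vec set \<Rightarrow> (vec \<Rightarrow> real) \<Rightarrow> nat \<Rightarrow> (nat \<Rightarrow> vec) \<Rightarrow> real" where
  "weak1_norm V nu N x = (SUP phi\<in>dual_ball V nu. (\<Sum>j<N. \<bar>phi (x j)\<bar>))"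

text \<open>m-linear forms: A takes a sequence of arguments, only the first m matter.\<close>
definition sym_multilinear_bdd :: "vec set \<Rightarrow> (vec \<Rightarrow> real) \<Rightarrow> nat \<Rightarrow> ((nat \<Rightarrow> vec) \<Rightarrow> real) \<Rightarrow> bool" where
  "sym_multilinear_bdd V nu m A \<longleftrightarrow>
     (\<forall>v w. (\<forall>i<m. v i = w i) \<longrightarrow> A v = A w) \<and>
     (\<forall>v i y. (\<forall>j<m. v j \<in> V) \<longrightarrow> i < m \<longrightarrow> y \<in> V \<longrightarrow>
          A (v(i := vadd (v i) y)) = A v + A (v(i := y))) \<and>
     (\<forall>v i c. (\<forall>j<m. v j \<in> V) \<longrightarrow> i < m \<longrightarrow>
          A (v(i := vscale c (v i))) = c * A v) \<and>
     (\<forall>v \<sigma>. \<sigma> permutes {..<m} \<longrightarrow> A (v \<circ> \<sigma>) = A v) \<and>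
     (\<exists>C. \<forall>v. (\<forall>j<m. v j \<in> V) \<longrightarrow> \<bar>A v\<bar> \<le> C * (\<Prod>j<m. nu (v j)))"

definition poly_norm :: "vec set \<Rightarrow> (vec \<Rightarrow> real) \<Rightarrow> ((nat \<Rightarrow> vec) \<Rightarrow> real) \<Rightarrow> real" where
  "poly_norm V nu A = (SUP x\<in>{x\<in>V. nu x \<le> 1}. \<bar>A (\<lambda>_. x)\<bar>)"

text \<open>L is an admissible constant in the polynomial Bohnenblust--Hille type inequality
  of degree m (for all real Banach spaces in the above representation).
  A is the polar of P, P x = A(x,...,x).\<close>
definition BH_admissible :: "nat \<Rightarrow> real \<Rightarrow> bool" where
  "BH_admissible m L \<longleftrightarrow>
     (\<forall>V nu A N x. is_banach_str V nu \<longrightarrow> sym_multilinear_bdd V nu m A \<longrightarrow>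
        (\<forall>k<m. \<forall>j<N. x k j \<in> V) \<longrightarrow>
        (\<Sum>jj\<in>PiE {..<m} (\<lambda>_. {..<N}). \<bar>A (\<lambda>k. x k (jj k))\<bar> powr (2 * real m / (real m + 1)))
            powr ((real m + 1) / (2 * real m))
        \<le> L * poly_norm V nu A * (\<Prod>k<m. weak1_norm V nu N (x k)))"

definition f_t :: "real \<Rightarrow> real" where
  "f_t t = (2 * t powr (4/3) + 2 * (sqrt (t * (1 - t))) powr (4/3)) powr (3/4)"

definition coeffA :: "real \<Rightarrow> nat \<Rightarrow> nat \<Rightarrow> real" where
  "coeffA t0 k j = (\<Sum>l=0..j div 2.
     (if j \<le> k + l then
        fact k * (-1) ^ (k + l - j) * t0 ^ (k + 2 * l - j) * (2 * sqrt (t0 * (1 - t0))) ^ (j - 2 * l)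
        / (fact l * fact (j - 2 * l) * fact (k + l - j))
      else 0))"

end

theory Submission
  imports Defs
begin



definition V2 :: "vec set" where "V2 = {x. \<forall>i\<ge>2. x i = 0}"
definition nu2 :: "vec \<Rightarrow> real" where "nu2 x = max \<bar>x 0\<bar> \<bar>x 1\<bar>"
definition ev :: "nat \<Rightarrow> vec" where "ev j = (\<lambda>i. if i = j then 1 else 0)"

lemma nu2_ge: "\<bar>x 0\<bar> \<le> nu2 x" "\<bar>x 1\<bar> \<le> nu2 x"
  by (auto simp: nu2_def)

lemma V2_cauchy:
  fixes s :: "nat \<Rightarrow> vec"
  assumes s: "\<forall>n. s n \<in> V2"
    and C: "\<forall>e>0. \<exists>M. \<forall>p\<ge>M. \<forall>q\<ge>M. nu2 (vsub (s p) (s q)) < e"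
  shows "\<exists>l\<in>V2. \<forall>e>0. \<exists>M. \<forall>p\<ge>M. nu2 (vsub (s p) l) < e"
proof -
  have cc: "Cauchy (\<lambda>n. s n i)" if "i \<le> 1" for i :: nat
  proof (rule metric_CauchyI)
    fix e :: real assume "e > 0"
    then obtain M where M: "\<forall>p\<ge>M. \<forall>q\<ge>M. nu2 (vsub (s p) (s q)) < e" using C by blast
    show "\<exists>M. \<forall>m\<ge>M. \<forall>n\<ge>M. dist (s m i) (s n i) < e"
    proof (intro exI allI impI)
      fix p q assume "p \<ge> M" "q \<ge> M"
      hence "nu2 (vsub (s p) (s q)) < e" using M by blast
      moreover have "\<bar>s p i - s q i\<bar> \<le> nu2 (vsub (s p) (s q))"
        using that nu2_ge[of "vsub (s p) (s q)"] by (cases i) (auto simp: vsub_def)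
      ultimately show "dist (s p i) (s q i) < e" by (simp add: dist_real_def)
    qed
  qed
  obtain a0 where a0: "(\<lambda>n. s n 0) \<longlonglongrightarrow> a0" using cc[of 0] Cauchy_convergent convergent_def by blast
  obtain a1 where a1: "(\<lambda>n. s n 1) \<longlonglongrightarrow> a1" using cc[of 1] Cauchy_convergent convergent_def by blast
  define l :: vec where "l = (\<lambda>i. if i = 0 then a0 else if i = 1 then a1 else 0)"
  have "l \<in> V2" by (auto simp: l_def V2_def)
  moreover have "\<forall>e>0. \<exists>M. \<forall>p\<ge>M. nu2 (vsub (s p) l) < e"
  proof (intro allI impI)
    fix e :: real assume e: "e > 0"
    obtain M0 where M0: "\<forall>p\<ge>M0. \<bar>s p 0 - a0\<bar> < e" using LIMSEQ_D[OF a0 e] by (auto simp: real_norm_def)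
    obtain M1 where M1: "\<forall>p\<ge>M1. \<bar>s p 1 - a1\<bar> < e" using LIMSEQ_D[OF a1 e] by (auto simp: real_norm_def)
    show "\<exists>M. \<forall>p\<ge>M. nu2 (vsub (s p) l) < e"
      by (rule exI[of _ "max M0 M1"]) (auto simp: nu2_def vsub_def l_def M0 M1[simplified])
  qed
  ultimately show ?thesis by blast
qed

lemma banach2: "is_banach_str V2 nu2"
  unfolding is_banach_str_def
proof (intro conjI ballI allI impI)
  show "(\<lambda>i. 0) \<in> V2" by (simp add: V2_def)
next
  fix x y assume "x \<in> V2" "y \<in> V2" thus "vadd x y \<in> V2" by (simp add: V2_def vadd_def)
next
  fix x c assume "x \<in> V2" thus "vscale c x \<in> V2" by (simp add: V2_def vscale_def)
next
  fix x show "nu2 x \<ge> 0" by (simp add: nu2_def)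
next
  fix x assume x: "x \<in> V2"
  show "nu2 x = 0 \<longleftrightarrow> x = (\<lambda>i. 0)"
  proof
    assume "nu2 x = 0"
    hence "x 0 = 0" "x 1 = 0" using nu2_ge[of x] by auto
    thus "x = (\<lambda>i. 0)" using x unfolding V2_def
      by (auto simp: fun_eq_iff) (metis One_nat_def less_2_cases not_le)
  qed (simp add: nu2_def)
next
  fix x c show "nu2 (vscale c x) = \<bar>c\<bar> * nu2 x"
    by (simp add: nu2_def vscale_def abs_mult max_mult_distrib_left)
next
  fix x y show "nu2 (vadd x y) \<le> nu2 x + nu2 y"
    by (simp add: nu2_def vadd_def) linarith
next
  fix s :: "nat \<Rightarrow> vec" assume "\<forall>n. s n \<in> V2" "\<forall>e>0. \<exists>M. \<forall>p\<ge>M. \<forall>q\<ge>M. nu2 (vsub (s p) (s q)) < e"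
  thus "\<exists>l\<in>V2. \<forall>e>0. \<exists>M. \<forall>p\<ge>M. nu2 (vsub (s p) l) < e" by (rule V2_cauchy)
qed




definition Af :: "nat \<Rightarrow> (nat \<Rightarrow> real) \<Rightarrow> (nat \<Rightarrow> vec) \<Rightarrow> real" where
  "Af m c v = (\<Sum>S\<in>Pow {..<m}. c (card S) * (\<Prod>i\<in>S. v i 0) * (\<Prod>i\<in>{..<m}-S. v i 1))"

lemma prod_upd_in:
  assumes "finite F" "i \<in> F"
  shows "(\<Prod>l\<in>F. (v(i:=z)) l a) = z a * (\<Prod>l\<in>F-{i}. v l a)"
proof -
  have "(\<Prod>l\<in>F. (v(i:=z)) l a) = (v(i:=z)) i a * (\<Prod>l\<in>F-{i}. (v(i:=z)) l a)"
    by (rule prod.remove[OF assms])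
  also have "(\<Prod>l\<in>F-{i}. (v(i:=z)) l a) = (\<Prod>l\<in>F-{i}. v l a)"
    by (rule prod.cong) auto
  finally show ?thesis by simp
qed

lemma prod_upd_notin:
  assumes "i \<notin> F"
  shows "(\<Prod>l\<in>F. (v(i:=z)) l a) = (\<Prod>l\<in>F. v l a)"
  using assms by (intro prod.cong) auto

lemma Af_add:
  assumes "i < m"
  shows "Af m c (v(i := vadd (v i) y)) = Af m c v + Af m c (v(i := y))"
  unfolding Af_def sum.distrib[symmetric]
proof (rule sum.cong[OF refl])
  fix S assume S: "S \<in> Pow {..<m}"
  hence fin: "finite S" "finite ({..<m} - S)" by (auto intro: finite_subset)
  show "c (card S) * (\<Prod>l\<in>S. (v(i := vadd (v i) y)) l 0) * (\<Prod>l\<in>{..<m} - S. (v(i := vadd (v i) y)) l 1) =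
        c (card S) * (\<Prod>l\<in>S. v l 0) * (\<Prod>l\<in>{..<m} - S. v l 1) +
        c (card S) * (\<Prod>l\<in>S. (v(i := y)) l 0) * (\<Prod>l\<in>{..<m} - S. (v(i := y)) l 1)"
  proof (cases "i \<in> S")
    case True
    have "(\<Prod>l\<in>S. v l 0) = v i 0 * (\<Prod>l\<in>S-{i}. v l 0)" by (rule prod.remove[OF fin(1) True])
    moreover have ni: "i \<notin> {..<m} - S" using True by auto
    ultimately show ?thesis
      by (simp only: prod_upd_in[OF fin(1) True] prod_upd_notin[OF ni]) (simp add: vadd_def algebra_simps)
  next
    case False
    hence i: "i \<in> {..<m} - S" using assms by auto
    have "(\<Prod>l\<in>{..<m}-S. v l 1) = v i 1 * (\<Prod>l\<in>({..<m}-S)-{i}. v l 1)" by (rule prod.remove[OF fin(2) i])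
    thus ?thesis
      by (simp only: prod_upd_in[OF fin(2) i] prod_upd_notin[OF False]) (simp add: vadd_def algebra_simps)
  qed
qed

lemma Af_scale:
  assumes "i < m"
  shows "Af m c (v(i := vscale a (v i))) = a * Af m c v"
  unfolding Af_def sum_distrib_left
proof (rule sum.cong[OF refl])
  fix S assume S: "S \<in> Pow {..<m}"
  hence fin: "finite S" "finite ({..<m} - S)" by (auto intro: finite_subset)
  show "c (card S) * (\<Prod>l\<in>S. (v(i := vscale a (v i))) l 0) * (\<Prod>l\<in>{..<m} - S. (v(i := vscale a (v i))) l 1) =
        a * (c (card S) * (\<Prod>l\<in>S. v l 0) * (\<Prod>l\<in>{..<m} - S. v l 1))"
  proof (cases "i \<in> S")
    case True
    have "(\<Prod>l\<in>S. v l 0) = v i 0 * (\<Prod>l\<in>S-{i}. v l 0)" by (rule prod.remove[OF fin(1) True])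
    moreover have ni: "i \<notin> {..<m} - S" using True by auto
    ultimately show ?thesis
      by (simp only: prod_upd_in[OF fin(1) True] prod_upd_notin[OF ni]) (simp add: vscale_def algebra_simps)
  next
    case False
    hence i: "i \<in> {..<m} - S" using assms by auto
    have "(\<Prod>l\<in>{..<m}-S. v l 1) = v i 1 * (\<Prod>l\<in>({..<m}-S)-{i}. v l 1)" by (rule prod.remove[OF fin(2) i])
    thus ?thesis
      by (simp only: prod_upd_in[OF fin(2) i] prod_upd_notin[OF False]) (simp add: vscale_def algebra_simps)
  qed
qed

lemma Af_perm:
  assumes p: "\<sigma> permutes {..<m}"
  shows "Af m c (v \<circ> \<sigma>) = Af m c v"
proof -
  have inj: "inj \<sigma>" using p permutes_inj by blast
  have im: "\<sigma> ` {..<m} = {..<m}" using p permutes_image by blast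
  have injP: "inj_on ((`) \<sigma>) (Pow {..<m})" using inj by (meson inj_image_eq_iff inj_onI)
  have PP: "(`) \<sigma> ` Pow {..<m} = Pow {..<m}"
  proof
    show "(`) \<sigma> ` Pow {..<m} \<subseteq> Pow {..<m}" using im by auto
    show "Pow {..<m} \<subseteq> (`) \<sigma> ` Pow {..<m}"
    proof
      fix T assume T: "T \<in> Pow {..<m}"
      have "T = \<sigma> ` (inv \<sigma> ` T)" using p by (simp add: image_image permutes_inverses(1))
      moreover have "inv \<sigma> ` T \<in> Pow {..<m}" using T permutes_inv[OF p] permutes_image[OF permutes_inv[OF p]] by auto
      ultimately show "T \<in> (`) \<sigma> ` Pow {..<m}" by blast
    qed
  qed
  have "Af m c v = (\<Sum>S\<in>(`) \<sigma> ` Pow {..<m}. c (card S) * (\<Prod>i\<in>S. v i 0) * (\<Prod>i\<in>{..<m}-S. v i 1))"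
    unfolding Af_def PP ..
  also have "\<dots> = (\<Sum>S\<in>Pow {..<m}. c (card (\<sigma> ` S)) * (\<Prod>i\<in>\<sigma> ` S. v i 0) * (\<Prod>i\<in>{..<m}-\<sigma> ` S. v i 1))"
    using sum.reindex[OF injP] by (simp add: comp_def)
  also have "\<dots> = Af m c (v \<circ> \<sigma>)"
    unfolding Af_def
  proof (rule sum.cong[OF refl])
    fix S assume S: "S \<in> Pow {..<m}"
    have d: "{..<m} - \<sigma> ` S = \<sigma> ` ({..<m} - S)" using im inj by (metis image_set_diff)
    have i1: "inj_on \<sigma> S" "inj_on \<sigma> ({..<m} - S)" using inj by (auto intro: inj_on_subset)
    show "c (card (\<sigma> ` S)) * (\<Prod>i\<in>\<sigma> ` S. v i 0) * (\<Prod>i\<in>{..<m}-\<sigma> ` S. v i 1) =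
          c (card S) * (\<Prod>i\<in>S. (v \<circ> \<sigma>) i 0) * (\<Prod>i\<in>{..<m} - S. (v \<circ> \<sigma>) i 1)"
      unfolding d using i1 by (simp add: prod.reindex card_image)
  qed
  finally show ?thesis ..
qed

lemma Af_bound:
  "\<bar>Af m c v\<bar> \<le> (\<Sum>S\<in>Pow {..<m}. \<bar>c (card S)\<bar>) * (\<Prod>j<m. nu2 (v j))"
proof -
  have "\<bar>Af m c v\<bar> \<le> (\<Sum>S\<in>Pow {..<m}. \<bar>c (card S) * (\<Prod>i\<in>S. v i 0) * (\<Prod>i\<in>{..<m}-S. v i 1)\<bar>)"
    unfolding Af_def by (rule sum_abs)
  also have "\<dots> \<le> (\<Sum>S\<in>Pow {..<m}. \<bar>c (card S)\<bar> * (\<Prod>j<m. nu2 (v j)))"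
  proof (rule sum_mono)
    fix S assume S: "S \<in> Pow {..<m}"
    have nn: "0 \<le> nu2 x" for x by (simp add: nu2_def)
    have a: "\<bar>\<Prod>i\<in>S. v i 0\<bar> \<le> (\<Prod>i\<in>S. nu2 (v i))"
      unfolding abs_prod by (rule prod_mono) (simp add: nu2_def)
    have b: "\<bar>\<Prod>i\<in>{..<m}-S. v i 1\<bar> \<le> (\<Prod>i\<in>{..<m}-S. nu2 (v i))"
      unfolding abs_prod by (rule prod_mono) (simp add: nu2_def)
    have e: "(\<Prod>j<m. nu2 (v j)) = (\<Prod>i\<in>{..<m}-S. nu2 (v i)) * (\<Prod>i\<in>S. nu2 (v i))"
      using S by (intro prod.subset_diff) auto
    have "\<bar>\<Prod>i\<in>S. v i 0\<bar> * \<bar>\<Prod>i\<in>{..<m}-S. v i 1\<bar> \<le> (\<Prod>i\<in>S. nu2 (v i)) * (\<Prod>i\<in>{..<m}-S. nu2 (v i))"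
      by (rule mult_mono[OF a b]) (auto intro: prod_nonneg nn)
    hence "\<bar>c (card S)\<bar> * (\<bar>\<Prod>i\<in>S. v i 0\<bar> * \<bar>\<Prod>i\<in>{..<m}-S. v i 1\<bar>) \<le> \<bar>c (card S)\<bar> * ((\<Prod>i\<in>S. nu2 (v i)) * (\<Prod>i\<in>{..<m}-S. nu2 (v i)))"
      by (rule mult_left_mono) simp
    thus "\<bar>c (card S) * (\<Prod>i\<in>S. v i 0) * (\<Prod>i\<in>{..<m}-S. v i 1)\<bar> \<le> \<bar>c (card S)\<bar> * (\<Prod>j<m. nu2 (v j))"
      unfolding e by (simp add: abs_mult mult_ac)
  qed
  also have "\<dots> = (\<Sum>S\<in>Pow {..<m}. \<bar>c (card S)\<bar>) * (\<Prod>j<m. nu2 (v j))"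
    by (simp add: sum_distrib_right)
  finally show ?thesis .
qed

lemma Af_sym: "sym_multilinear_bdd V2 nu2 m (Af m c)"
  unfolding sym_multilinear_bdd_def
proof (intro conjI allI impI)
  fix v w :: "nat \<Rightarrow> vec" assume "\<forall>i<m. v i = w i"
  thus "Af m c v = Af m c w" unfolding Af_def
    by (intro sum.cong refl arg_cong2[where f="(*)"] prod.cong) auto
next
  fix v i y assume "i < m" thus "Af m c (v(i := vadd (v i) y)) = Af m c v + Af m c (v(i := y))"
    by (rule Af_add)
next
  fix v i a assume "i < m" thus "Af m c (v(i := vscale a (v i))) = a * Af m c v"
    by (rule Af_scale)
next
  fix v \<sigma> assume "\<sigma> permutes {..<m}" thus "Af m c (v \<circ> \<sigma>) = Af m c v" by (rule Af_perm)
next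
  show "\<exists>C. \<forall>v. (\<forall>j<m. v j \<in> V2) \<longrightarrow> \<bar>Af m c v\<bar> \<le> C * (\<Prod>j<m. nu2 (v j))"
    using Af_bound by blast
qed




lemma ev_term:
  fixes m :: nat
  assumes jj: "jj \<in> PiE {..<m} (\<lambda>_. {..<2::nat})" and S: "S \<subseteq> {..<m}"
  shows "(\<Prod>i\<in>S. ev (jj i) 0) * (\<Prod>i\<in>{..<m}-S. ev (jj i) 1) =
         (if S = {i\<in>{..<m}. jj i = 0} then 1 else 0)"
proof (cases "S = {i\<in>{..<m}. jj i = 0}")
  case True
  have a: "(\<Prod>i\<in>S. ev (jj i) 0) = 1"
  proof (rule prod.neutral, rule ballI)
    fix i assume "i \<in> S" hence "jj i = 0" using True by blast
    thus "ev (jj i) 0 = 1" by (simp add: ev_def)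
  qed
  have b: "(\<Prod>i\<in>{..<m}-S. ev (jj i) 1) = 1"
  proof (rule prod.neutral, rule ballI)
    fix i assume i: "i \<in> {..<m}-S" hence "jj i \<noteq> 0 \<and> i < m" using True by auto
    hence "jj i \<noteq> 0" "i < m" by auto
    moreover have "jj i < 2" using jj \<open>i < m\<close> by (simp add: PiE_iff)
    ultimately have "jj i = 1" by linarith
    thus "ev (jj i) 1 = 1" by (simp add: ev_def)
  qed
  show ?thesis using a b True by simp
next
  case False
  have finS1: "finite S" using finite_subset[OF S] by simp
  have finS2: "finite ({..<m} - S)" by simp
  have "\<not> (\<forall>i\<in>S. jj i = 0) \<or> \<not> (\<forall>i\<in>{..<m}-S. jj i \<noteq> 0)"
  proof (rule ccontr)
    assume "\<not> ?thesis"
    hence "(\<forall>i\<in>S. jj i = 0)" "(\<forall>i\<in>{..<m}-S. jj i \<noteq> 0)" by auto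
    hence "S = {i\<in>{..<m}. jj i = 0}" using S by (auto, force)
    thus False using False by contradiction
  qed
  hence "(\<Prod>i\<in>S. ev (jj i) 0) = 0 \<or> (\<Prod>i\<in>{..<m}-S. ev (jj i) 1) = 0"
  proof
    assume "\<not> (\<forall>i\<in>S. jj i = 0)"
    then obtain i where "i \<in> S" "jj i \<noteq> 0" by blast
    hence "\<exists>i\<in>S. ev (jj i) 0 = 0" by (auto simp: ev_def)
    thus ?thesis using finS1 by (simp add: prod_zero_iff)
  next
    assume "\<not> (\<forall>i\<in>{..<m}-S. jj i \<noteq> 0)"
    then obtain i where "i \<in> {..<m}-S" "jj i = 0" by blast
    hence "\<exists>i\<in>{..<m}-S. ev (jj i) 1 = 0" by (intro bexI[of _ i]) (auto simp: ev_def)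
    thus ?thesis using finS2 by (simp add: prod_zero_iff)
  qed
  thus ?thesis using False by auto
qed

lemma Af_ev:
  assumes jj: "jj \<in> PiE {..<m} (\<lambda>_. {..<2::nat})"
  shows "Af m c (\<lambda>k. ev (jj k)) = c (card {i\<in>{..<m}. jj i = 0})"
proof -
  have "Af m c (\<lambda>k. ev (jj k)) = (\<Sum>S\<in>Pow {..<m}. if {i\<in>{..<m}. jj i = 0} = S then c (card S) else 0)"
    unfolding Af_def
  proof (rule sum.cong[OF refl])
    fix S assume "S \<in> Pow {..<m}"
    hence "S \<subseteq> {..<m}" by auto
    from ev_term[OF jj this] show "c (card S) * (\<Prod>i\<in>S. ev (jj i) 0) * (\<Prod>i\<in>{..<m} - S. ev (jj i) 1) =
      (if {i\<in>{..<m}. jj i = 0} = S then c (card S) else 0)"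
      by (auto simp: mult.assoc)
  qed
  also have "\<dots> = c (card {i\<in>{..<m}. jj i = 0})" by (rule trans[OF sum.delta']) auto
  finally show ?thesis .
qed

lemma sum_PiE_Pow:
  fixes m :: nat
  shows "(\<Sum>jj\<in>PiE {..<m} (\<lambda>_. {..<2::nat}). g (card {i\<in>{..<m}. jj i = 0})) = (\<Sum>S\<in>Pow {..<m}. g (card S))"
proof (rule sum.reindex_bij_witness[where j = "\<lambda>jj. {i\<in>{..<m}. jj i = 0}"
      and i = "\<lambda>S x. if x < m then (if x \<in> S then 0 else 1) else undefined"])
  fix jj assume jj: "jj \<in> PiE {..<m} (\<lambda>_. {..<2::nat})"
  show "(\<lambda>x. if x < m then if x \<in> {i \<in> {..<m}. jj i = 0} then 0 else 1 else undefined) = jj"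
  proof
    fix x show "(if x < m then if x \<in> {i \<in> {..<m}. jj i = 0} then 0 else 1 else undefined) = jj x"
      using jj by (cases "x < m") (auto simp: PiE_def Pi_def extensional_def)
  qed
next
  fix jj assume "jj \<in> PiE {..<m} (\<lambda>_. {..<2::nat})"
  show "{i\<in>{..<m}. jj i = 0} \<in> Pow {..<m}" by auto
next
  fix S assume S: "S \<in> Pow {..<m}"
  show "{i\<in>{..<m}. (if i < m then (if i \<in> S then 0 else 1) else undefined) = (0::nat)} = S"
    using S by auto
next
  fix S assume S: "S \<in> Pow {..<m}"
  show "(\<lambda>x. if x < m then (if x \<in> S then 0 else 1) else undefined) \<in> PiE {..<m} (\<lambda>_. {..<2::nat})"
    by (simp add: PiE_iff extensional_def)
qed simp

lemma sum_Pow_card: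
  "(\<Sum>S\<in>Pow {..<m}. g (card S)) = (\<Sum>j=0..m. real (m choose j) * g j)"
proof -
  have "(\<Sum>S\<in>Pow {..<m}. g (card S)) = (\<Sum>j=0..m. \<Sum>S\<in>{S\<in>Pow {..<m}. card S = j}. g (card S))"
  proof (rule sum.group[symmetric])
    show "finite (Pow {..<m})" by simp
    show "finite {0..m}" by simp
    show "card ` Pow {..<m} \<subseteq> {0..m}"
    proof
      fix y assume "y \<in> card ` Pow {..<m}"
      then obtain S where "S \<subseteq> {..<m}" "y = card S" by auto
      hence "y \<le> card {..<m}" by (metis card_mono finite_lessThan)
      thus "y \<in> {0..m}" by simp
    qed
  qed
  also have "\<dots> = (\<Sum>j=0..m. real (m choose j) * g j)"
  proof (rule sum.cong[OF refl])
    fix j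
    have "{S\<in>Pow {..<m}. card S = j} = {B. B \<subseteq> {..<m} \<and> card B = j}" by auto
    hence c: "card {S\<in>Pow {..<m}. card S = j} = m choose j" using n_subsets[of "{..<m}" j] by simp
    have "(\<Sum>S\<in>{S\<in>Pow {..<m}. card S = j}. g (card S)) = (\<Sum>S\<in>{S\<in>Pow {..<m}. card S = j}. g j)"
      by (rule sum.cong) auto
    thus "(\<Sum>S\<in>{S\<in>Pow {..<m}. card S = j}. g (card S)) = real (m choose j) * g j"
      using c by simp
  qed
  finally show ?thesis .
qed

lemma Af_diag:
  "Af m c (\<lambda>_. x) = (\<Sum>j=0..m. real (m choose j) * (c j * x 0 ^ j * x 1 ^ (m - j)))"
proof -
  have "Af m c (\<lambda>_. x) = (\<Sum>S\<in>Pow {..<m}. c (card S) * x 0 ^ card S * x 1 ^ (m - card S))"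
    unfolding Af_def
  proof (rule sum.cong[OF refl])
    fix S assume "S \<in> Pow {..<m}"
    hence "card ({..<m} - S) = m - card S" by (subst card_Diff_subset) (auto intro: finite_subset)
    thus "c (card S) * (\<Prod>i\<in>S. x 0) * (\<Prod>i\<in>{..<m} - S. x 1) = c (card S) * x 0 ^ card S * x 1 ^ (m - card S)"
      by simp
  qed
  also have "\<dots> = (\<Sum>j=0..m. real (m choose j) * (c j * x 0 ^ j * x 1 ^ (m - j)))"
    by (rule sum_Pow_card)
  finally show ?thesis .
qed




lemma trinom:
  fixes a b d x y :: real and k :: nat
  shows "(a*x^2 + b*y^2 + d*x*y)^k = (\<Sum>j=0..2*k. (\<Sum>l=0..j div 2. if j \<le> k + l then
      fact k * a^l * b^(k+l-j) * d^(j-2*l) / (fact l * fact (j-2*l) * fact (k+l-j)) else 0) * x^j * y^(2*k-j))"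
proof -
  define F where "F = (\<lambda>c l. fact k / (fact l * fact c * fact (k-c-l)) * a^l * b^(k-c-l) * d^c * x^(2*l+c) * y^(2*(k-c-l)+c) :: real)"
  define G where "G = (\<lambda>j l. fact k * a^l * b^(k+l-j) * d^(j-2*l) / (fact l * fact (j-2*l) * fact (k+l-j)) * x^j * y^(2*k-j) :: real)"
  have "(a*x^2 + b*y^2 + d*x*y)^k = (d*x*y + (a*x^2 + b*y^2))^k" by (simp add: add_ac)
  also have "\<dots> = (\<Sum>c\<le>k. real (k choose c) * (d*x*y)^c * (a*x^2 + b*y^2)^(k-c))"
    by (rule binomial_ring)
  also have "\<dots> = (\<Sum>c\<le>k. \<Sum>l\<le>k-c. F c l)"
  proof (rule sum.cong[OF refl])
    fix c assume c: "c \<in> {..k}"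
    have "(a*x^2 + b*y^2)^(k-c) = (\<Sum>l\<le>k-c. real (k-c choose l) * (a*x^2)^l * (b*y^2)^(k-c-l))"
      by (rule binomial_ring)
    hence "real (k choose c) * (d*x*y)^c * (a*x^2 + b*y^2)^(k-c) =
        (\<Sum>l\<le>k-c. real (k choose c) * (d*x*y)^c * (real (k-c choose l) * (a*x^2)^l * (b*y^2)^(k-c-l)))"
      by (simp add: sum_distrib_left)
    also have "\<dots> = (\<Sum>l\<le>k-c. F c l)"
    proof (rule sum.cong[OF refl])
      fix l assume l: "l \<in> {..k-c}"
      have b1: "real (k choose c) = fact k / (fact c * fact (k-c))" using c by (simp add: binomial_fact)
      have b2: "real (k-c choose l) = fact (k-c) / (fact l * fact (k-c-l))" using l by (simp add: binomial_fact)
      have px: "x^(2*l+c) = (x^2)^l * x^c" by (simp add: power_add power_mult)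
      have py: "y^(2*(k-c-l)+c) = (y^2)^(k-c-l) * y^c" by (simp add: power_add power_mult)
      show "real (k choose c) * (d*x*y)^c * (real (k-c choose l) * (a*x^2)^l * (b*y^2)^(k-c-l)) = F c l"
        unfolding F_def b1 b2 px py
        by (simp add: power_mult_distrib field_simps)
    qed
    finally show "real (k choose c) * (d*x*y)^c * (a*x^2 + b*y^2)^(k-c) = (\<Sum>l\<le>k-c. F c l)" .
  qed
  also have "\<dots> = (\<Sum>(c,l)\<in>Sigma {..k} (\<lambda>c. {..k-c}). F c l)"
    by (rule sum.Sigma) auto
  also have "\<dots> = (\<Sum>(j,l)\<in>{p\<in>Sigma {0..2*k} (\<lambda>j. {0..j div 2}). fst p \<le> k + snd p}. G j l)"
  proof (rule sum.reindex_bij_witness[where j = "\<lambda>(c,l). (2*l+c, l)" and i = "\<lambda>(j,l). (j-2*l, l)"])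
    fix p assume "p \<in> Sigma {..k} (\<lambda>c. {..k-c})"
    then obtain c l where p: "p = (c,l)" "c \<le> k" "l \<le> k - c" by auto
    show "(case case p of (c, l) \<Rightarrow> (2*l+c, l) of (j, l) \<Rightarrow> (j - 2*l, l)) = p" using p by simp
    show "(case p of (c, l) \<Rightarrow> (2*l+c, l)) \<in> {p\<in>Sigma {0..2*k} (\<lambda>j. {0..j div 2}). fst p \<le> k + snd p}"
      using p by auto
    have e1: "k + l - (2*l+c) = k-c-l" "2*l+c-2*l = c" "2*k-(2*l+c) = 2*(k-c-l)+c" using p by auto
    show "(case case p of (c, l) \<Rightarrow> (2*l+c, l) of (j, l) \<Rightarrow> G j l) = (case p of (c, l) \<Rightarrow> F c l)"
      unfolding p(1) F_def G_def prod.case e1 by (simp add: mult_ac)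
  next
    fix q assume "q \<in> {p\<in>Sigma {0..2*k} (\<lambda>j. {0..j div 2}). fst p \<le> k + snd p}"
    then obtain j l where q: "q = (j,l)" "j \<le> 2*k" "l \<le> j div 2" "j \<le> k + l" by auto
    show "(case case q of (j, l) \<Rightarrow> (j - 2*l, l) of (c, l) \<Rightarrow> (2*l+c, l)) = q" using q by auto
    show "(case q of (j, l) \<Rightarrow> (j - 2*l, l)) \<in> Sigma {..k} (\<lambda>c. {..k-c})" using q by auto
  qed
  also have "\<dots> = (\<Sum>(j,l)\<in>Sigma {0..2*k} (\<lambda>j. {0..j div 2}). if j \<le> k + l then G j l else 0)"
  proof -
    have fin: "finite (Sigma {0..2*k} (\<lambda>j. {0..j div 2}))" by auto
    show ?thesis
    unfolding sum.inter_filter[OF fin]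
    by (rule sum.cong[OF refl]) (auto split: prod.split)
  qed
  also have "\<dots> = (\<Sum>j=0..2*k. \<Sum>l=0..j div 2. if j \<le> k + l then G j l else 0)"
    by (rule sum.Sigma[symmetric]) auto
  also have "\<dots> = (\<Sum>j=0..2*k. (\<Sum>l=0..j div 2. if j \<le> k + l then
      fact k * a^l * b^(k+l-j) * d^(j-2*l) / (fact l * fact (j-2*l) * fact (k+l-j)) else 0) * x^j * y^(2*k-j))"
    unfolding G_def sum_distrib_right by (intro sum.cong refl) simp
  finally show ?thesis .
qed




lemma q_bound:
  fixes t x y :: real
  assumes t: "1/2 \<le> t" "t \<le> 1" and x: "\<bar>x\<bar> \<le> 1" and y: "\<bar>y\<bar> \<le> 1"
  shows "\<bar>t*x^2 + (-t)*y^2 + (2*sqrt (t*(1-t)))*x*y\<bar> \<le> 1"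
proof -
  define a where "a = sqrt t"
  define b where "b = sqrt (1-t)"
  have a2: "a^2 = t" using t by (simp add: a_def)
  have b2: "b^2 = 1 - t" using t by (simp add: b_def)
  have t0: "0 \<le> t" using t by linarith
  have ab: "sqrt (t*(1-t)) = a*b" by (simp add: a_def b_def real_sqrt_mult)
  have a0: "a \<ge> 0" "b \<ge> 0" using t by (auto simp: a_def b_def)
  have ab0: "a*b \<ge> 0" using a0 by simp
  have xy1: "x*y \<le> \<bar>y\<bar>" "-(x*y) \<le> \<bar>x\<bar>"
  proof -
    have "\<bar>x*y\<bar> \<le> \<bar>y\<bar>" using x by (simp add: abs_mult mult_left_le_one_le)
    moreover have "\<bar>x*y\<bar> \<le> \<bar>x\<bar>" using y by (simp add: abs_mult mult_right_le_one_le)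
    ultimately show "x*y \<le> \<bar>y\<bar>" "-(x*y) \<le> \<bar>x\<bar>" by linarith+
  qed
  have x2: "x^2 \<le> 1" using x by (simp add: abs_square_le_1) 
  have y2: "y^2 \<le> 1" using y by (simp add: abs_square_le_1)
  define q where "q = t*x^2 + (-t)*y^2 + (2*(a*b))*x*y"
  have sqy: "(b - a*\<bar>y\<bar>)^2 = (1-t) - 2*(a*b)*\<bar>y\<bar> + t*y^2"
    unfolding power2_diff power_mult_distrib a2 b2 by simp
  have sqx: "(b - a*\<bar>x\<bar>)^2 = (1-t) - 2*(a*b)*\<bar>x\<bar> + t*x^2"
    unfolding power2_diff power_mult_distrib a2 b2 by simp
  have e1: "1 - q = t*(1-x^2) + (b - a*\<bar>y\<bar>)^2 + 2*(a*b)*(\<bar>y\<bar> - x*y)"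
    unfolding q_def sqy by (simp add: algebra_simps)
  have e2: "1 + q = t*(1-y^2) + (b - a*\<bar>x\<bar>)^2 + 2*(a*b)*(\<bar>x\<bar> + x*y)"
    unfolding q_def sqx by (simp add: algebra_simps)
  have "0 \<le> t*(1-x^2)" "0 \<le> t*(1-y^2)" using x2 y2 t0 by auto
  moreover have "0 \<le> 2*(a*b)*(\<bar>y\<bar> - x*y)" "0 \<le> 2*(a*b)*(\<bar>x\<bar> + x*y)"
    using ab0 xy1 by auto
  moreover have "0 \<le> (b - a*\<bar>y\<bar>)^2" "0 \<le> (b - a*\<bar>x\<bar>)^2" by auto
  ultimately have "0 \<le> 1 - q" "0 \<le> 1 + q" unfolding e1 e2 by linarith+
  hence "\<bar>q\<bar> \<le> 1" by linarith
  thus ?thesis unfolding q_def ab .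
qed

lemma coeffA_poly:
  fixes t0 x y :: real and k :: nat
  shows "(\<Sum>j=0..2*k. coeffA t0 k j * x^j * y^(2*k-j)) =
         (t0*x^2 + (-t0)*y^2 + (2*sqrt (t0*(1-t0)))*x*y)^k"
  unfolding trinom
proof (rule sum.cong[OF refl])
  fix j assume j: "j \<in> {0..2*k}"
  have "coeffA t0 k j = (\<Sum>l=0..j div 2. if j \<le> k + l then
      fact k * t0^l * (-t0)^(k+l-j) * (2*sqrt (t0*(1-t0)))^(j-2*l) / (fact l * fact (j-2*l) * fact (k+l-j)) else 0)"
    unfolding coeffA_def
  proof (rule sum.cong[OF refl])
    fix l assume l: "l \<in> {0..j div 2}"
    show "(if j \<le> k + l then fact k * (-1) ^ (k + l - j) * t0 ^ (k + 2 * l - j) * (2 * sqrt (t0 * (1 - t0))) ^ (j - 2 * l) /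
             (fact l * fact (j - 2 * l) * fact (k + l - j)) else 0) =
          (if j \<le> k + l then fact k * t0^l * (-t0)^(k+l-j) * (2*sqrt (t0*(1-t0)))^(j-2*l) / (fact l * fact (j-2*l) * fact (k+l-j)) else 0)"
    proof (cases "j \<le> k + l")
      case True
      hence "k + 2*l - j = l + (k+l-j)" by arith
      hence "t0 ^ (k + 2 * l - j) = t0^l * t0^(k+l-j)" by (simp add: power_add)
      moreover have "(-t0)^(k+l-j) = (-1)^(k+l-j) * t0^(k+l-j)" by (rule power_minus)
      ultimately show ?thesis using True by (simp add: mult_ac)
    qed simp
  qed
  thus "coeffA t0 k j * x^j * y^(2*k-j) = (\<Sum>l=0..j div 2. if j \<le> k + l then
      fact k * t0^l * (-t0)^(k+l-j) * (2*sqrt (t0*(1-t0)))^(j-2*l) / (fact l * fact (j-2*l) * fact (k+l-j)) else 0) * x^j * y^(2*k-j)"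
    by simp
qed




lemma ev_V2: "ev j \<in> V2" if "j < 2" for j
  using that by (auto simp: V2_def ev_def)

lemma weak1_ev: "weak1_norm V2 nu2 2 (\<lambda>j. ev j) = 1"
  unfolding weak1_norm_def
proof (rule antisym)
  have ub: "(\<Sum>j<2. \<bar>phi (ev j)\<bar>) \<le> 1" if phi: "phi \<in> dual_ball V2 nu2" for phi
  proof -
    define a :: real where "a = (if phi (ev 0) \<ge> 0 then 1 else -1)"
    define b :: real where "b = (if phi (ev 1) \<ge> 0 then 1 else -1)"
    have lin: "linear_on V2 phi" and bd: "\<forall>x\<in>V2. \<bar>phi x\<bar> \<le> nu2 x" using phi by (auto simp: dual_ball_def)
    have V: "ev 0 \<in> V2" "ev 1 \<in> V2" "vscale a (ev 0) \<in> V2" "vscale b (ev 1) \<in> V2"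
      by (auto simp: V2_def ev_def vscale_def)
    define w where "w = vadd (vscale a (ev 0)) (vscale b (ev 1))"
    have "w \<in> V2" by (auto simp: w_def V2_def ev_def vscale_def vadd_def)
    have "phi w = a * phi (ev 0) + b * phi (ev 1)"
      using lin V unfolding w_def linear_on_def by simp
    also have "\<dots> = \<bar>phi (ev 0)\<bar> + \<bar>phi (ev 1)\<bar>" by (simp add: a_def b_def)
    finally have pw: "phi w = \<bar>phi (ev 0)\<bar> + \<bar>phi (ev 1)\<bar>" .
    have "nu2 w = 1" by (simp add: nu2_def w_def vadd_def vscale_def ev_def a_def b_def)
    hence "\<bar>phi w\<bar> \<le> 1" using bd \<open>w \<in> V2\<close> by fastforce
    thus ?thesis using pw by (simp add: numeral_2_eq_2)
  qed
  have p0: "(\<lambda>x. x 0) \<in> dual_ball V2 nu2"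
    by (auto simp: dual_ball_def linear_on_def vadd_def vscale_def nu2_def)
  show "(SUP phi\<in>dual_ball V2 nu2. \<Sum>j<2. \<bar>phi (ev j)\<bar>) \<le> 1"
  proof (rule cSUP_least)
    show "dual_ball V2 nu2 \<noteq> {}"
      using p0 by blast
  qed (rule ub)
  have "(\<Sum>j<2. \<bar>ev j 0\<bar>) \<le> (SUP phi\<in>dual_ball V2 nu2. \<Sum>j<2. \<bar>phi (ev j)\<bar>)"
  proof (rule cSUP_upper[OF p0, of "\<lambda>phi. \<Sum>j<2. \<bar>phi (ev j)\<bar>", simplified])
    show "bdd_above ((\<lambda>phi. \<Sum>j<2. \<bar>phi (ev j)\<bar>) ` dual_ball V2 nu2)"
      using ub by (intro bdd_aboveI2) 
  qed
  moreover have "(\<Sum>j<2. \<bar>ev j 0\<bar>) = (1::real)" by (simp add: numeral_2_eq_2 ev_def)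
  ultimately show "1 \<le> (SUP phi\<in>dual_ball V2 nu2. \<Sum>j<2. \<bar>phi (ev j)\<bar>)" by simp
qed


lemma Af_poly:
  fixes t0 :: real and k :: nat
  shows "Af (2*k) (\<lambda>j. coeffA t0 k j / real (2*k choose j)) (\<lambda>_. x) =
         (t0*(x 0)^2 + (-t0)*(x 1)^2 + (2*sqrt (t0*(1-t0)))*(x 0)*(x 1))^k"
proof -
  have "Af (2*k) (\<lambda>j. coeffA t0 k j / real (2*k choose j)) (\<lambda>_. x) =
        (\<Sum>j=0..2*k. real (2*k choose j) * (coeffA t0 k j / real (2*k choose j) * x 0 ^ j * x 1 ^ (2*k - j)))"
    by (rule Af_diag)
  also have "\<dots> = (\<Sum>j=0..2*k. coeffA t0 k j * x 0 ^ j * x 1 ^ (2*k - j))"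
  proof (rule sum.cong[OF refl])
    fix j assume "j \<in> {0..2*k}"
    hence "real (2*k choose j) \<noteq> 0" by simp
    thus "real (2*k choose j) * (coeffA t0 k j / real (2*k choose j) * x 0 ^ j * x 1 ^ (2*k - j)) =
          coeffA t0 k j * x 0 ^ j * x 1 ^ (2*k - j)" by simp
  qed
  also have "\<dots> = (t0*(x 0)^2 + (-t0)*(x 1)^2 + (2*sqrt (t0*(1-t0)))*(x 0)*(x 1))^k"
    by (rule coeffA_poly)
  finally show ?thesis .
qed

lemma poly_norm_bounds:
  fixes t0 :: real and k :: nat
  assumes t: "1/2 \<le> t0" "t0 \<le> 1"
  defines "pn \<equiv> poly_norm V2 nu2 (Af (2*k) (\<lambda>j. coeffA t0 k j / real (2*k choose j)))"
  shows "0 < pn" "pn \<le> 1"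
proof -
  let ?A = "Af (2*k) (\<lambda>j. coeffA t0 k j / real (2*k choose j))"
  let ?B = "{x\<in>V2. nu2 x \<le> 1}"
  have ub: "\<bar>?A (\<lambda>_. x)\<bar> \<le> 1" if "x \<in> ?B" for x
  proof -
    have "\<bar>x 0\<bar> \<le> 1" "\<bar>x 1\<bar> \<le> 1" using that nu2_ge[of x] by auto
    from q_bound[OF t this] have "\<bar>t0*(x 0)^2 + (-t0)*(x 1)^2 + (2*sqrt (t0*(1-t0)))*(x 0)*(x 1)\<bar> \<le> 1" .
    hence "\<bar>t0*(x 0)^2 + (-t0)*(x 1)^2 + (2*sqrt (t0*(1-t0)))*(x 0)*(x 1)\<bar> ^ k \<le> 1"
      by (rule power_le_one[OF abs_ge_zero])
    thus ?thesis unfolding Af_poly power_abs .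
  qed
  have e0: "ev 0 \<in> ?B" by (simp add: V2_def ev_def nu2_def)
  show "pn \<le> 1" unfolding pn_def poly_norm_def
    by (rule cSUP_least) (use e0 ub in auto)
  have "\<bar>?A (\<lambda>_. ev 0)\<bar> \<le> pn" unfolding pn_def poly_norm_def
    by (rule cSUP_upper[OF e0]) (use ub in \<open>intro bdd_aboveI2\<close>)
  moreover have "?A (\<lambda>_. ev 0) = t0 ^ k" unfolding Af_poly by (simp add: ev_def)
  moreover have "0 < t0 ^ k" using t by simp
  ultimately show "0 < pn" by simp
qed

theorem mainTheorem5:
  fixes t0 :: real and k :: nat and L :: real
  assumes "t0 \<in> {1/2..1}"
    and "\<forall>t\<in>{1/2..1}. f_t t \<le> f_t t0"
    and "k \<ge> 1"
    and "BH_admissible (2 * k) L"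
  shows "L \<ge> (\<Sum>j=0..2*k. real (2*k choose j) *
              \<bar>coeffA t0 k j / real (2*k choose j)\<bar> powr (4 * real k / (2 * real k + 1)))
            powr ((2 * real k + 1) / (4 * real k))"
proof -
  define c where "c = (\<lambda>j. coeffA t0 k j / real (2*k choose j))"
  define A where "A = Af (2*k) c"
  define pn where "pn = poly_norm V2 nu2 A"
  have t: "1/2 \<le> t0" "t0 \<le> 1" using assms(1) by auto
  have pn: "0 < pn" "pn \<le> 1" using poly_norm_bounds[OF t] unfolding pn_def A_def c_def by auto
  have xs: "\<And>ka j. ka < 2*k \<Longrightarrow> j < 2 \<Longrightarrow> ev j \<in> V2" using ev_V2 by blast
  have BH: "(\<Sum>jj\<in>PiE {..<2*k} (\<lambda>_. {..<2}). \<bar>A (\<lambda>k'. ev (jj k'))\<bar> powr (2 * real (2*k) / (real (2*k) + 1)))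
            powr ((real (2*k) + 1) / (2 * real (2*k)))
        \<le> L * pn * (\<Prod>k'<2*k. weak1_norm V2 nu2 2 (\<lambda>j. ev j))"
    using assms(4)[unfolded BH_admissible_def, rule_format, of V2 nu2 "Af (2*k) c" 2 "\<lambda>_ j. ev j",
        OF banach2 Af_sym xs] unfolding A_def pn_def by simp
  have p1: "2 * real (2*k) / (real (2*k) + 1) = 4 * real k / (2 * real k + 1)" by simp
  have p2: "(real (2*k) + 1) / (2 * real (2*k)) = (2 * real k + 1) / (4 * real k)" by simp
  have "(\<Sum>jj\<in>PiE {..<2*k} (\<lambda>_. {..<2}). \<bar>A (\<lambda>k'. ev (jj k'))\<bar> powr (4 * real k / (2 * real k + 1)))
      = (\<Sum>jj\<in>PiE {..<2*k} (\<lambda>_. {..<2::nat}). (\<lambda>n. \<bar>c n\<bar> powr (4 * real k / (2 * real k + 1))) (card {i\<in>{..<2*k}. jj i = 0}))"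
    by (rule sum.cong[OF refl]) (simp add: A_def Af_ev)
  also have "\<dots> = (\<Sum>S\<in>Pow {..<2*k}. (\<lambda>n. \<bar>c n\<bar> powr (4 * real k / (2 * real k + 1))) (card S))"
    by (rule sum_PiE_Pow)
  also have "\<dots> = (\<Sum>j=0..2*k. real (2*k choose j) * \<bar>c j\<bar> powr (4 * real k / (2 * real k + 1)))"
    by (rule sum_Pow_card)
  finally have eq: "(\<Sum>jj\<in>PiE {..<2*k} (\<lambda>_. {..<2}). \<bar>A (\<lambda>k'. ev (jj k'))\<bar> powr (4 * real k / (2 * real k + 1)))
      = (\<Sum>j=0..2*k. real (2*k choose j) * \<bar>c j\<bar> powr (4 * real k / (2 * real k + 1)))" .
  define G where "G = (\<Sum>j=0..2*k. real (2*k choose j) *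
              \<bar>coeffA t0 k j / real (2*k choose j)\<bar> powr (4 * real k / (2 * real k + 1)))
            powr ((2 * real k + 1) / (4 * real k))"
  have "G \<le> L * pn" using BH unfolding p1 p2 eq weak1_ev G_def c_def by simp
  moreover have "0 \<le> G" unfolding G_def by simp
  ultimately have "L \<ge> 0" using pn
  proof -
    have "0 \<le> L * pn" using \<open>G \<le> L * pn\<close> \<open>0 \<le> G\<close> by linarith
    thus ?thesis using pn(1) by (simp add: zero_le_mult_iff)
  qed
  hence "L * pn \<le> L * 1" using pn by (intro mult_left_mono) auto
  with \<open>G \<le> L * pn\<close> show ?thesis unfolding G_def by linarith
qed


end
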